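(* Let $n,a,t\in\mathbb N$ with $t<a<n$. Let $\mathcal F,\mathcal G\subseteq\binom{[n]}{a}$ be such that $L_{t+1}(G)\not\preceq_{t+1}R_{t+1}(F)$ for all $F\in\mathcal F$, $G\in\mathcal G$. Let $\mathbf X$ and $\mathbf Y$ be independent random subsets of $[n]$, each distributed according to $\mu_{a/n}$. Then $$\Pr[\mathbf X\in\mathcal F,\ \mathbf Y\in\mathcal G]\le 4n\cdot\exp\left(-(a-t-1)^2/(20a)\right).$$
   Context: $[n]=\{1,\dots,n\}$, $\binom{[n]}{l}$ is the family of $l$-element subsets of $[n]$. For $X\subseteq[n]$ and $1\le i\le|X|$, $m(X,i)$ is the $i$-th smallest element of $X$. For $l\in[n]$, the partial order $\preceq_l$ on $\binom{[n]}{l}$ is defined by $X\preceq_l Y$ iff $m(X,i)\le m(Y,i)$ for all $1\le i\le l$. For $X\in\binom{[n]}{a}$ and $j\le a$, $L_j(X)$ is the set of the $j$ smallest elements of $X$ and $R_j(X)$ the set of the $j$ largest elements of $X$. For $p\in[0,1]$, $\mu_p$ is the probability measure on subsets of $[n]$ giving $X\subseteq[n]$ probability $p^{|X|}(1-p)^{n-|X|}$ (each element included independently with probability $p$). *)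

theory Defs
  imports Complex_Main
begin

definition mth :: "nat set \<Rightarrow> nat \<Rightarrow> nat" where
  "mth X i = sorted_list_of_set X ! (i - 1)"

definition preceq :: "nat \<Rightarrow> nat set \<Rightarrow> nat set \<Rightarrow> bool" where
  "preceq l X Y \<longleftrightarrow> finite X \<and> finite Y \<and> card X = l \<and> card Y = l \<and>
     (\<forall>i\<in>{1..l}. mth X i \<le> mth Y i)"

definition Lset :: "nat \<Rightarrow> nat set \<Rightarrow> nat set" where
  "Lset j X = set (take j (sorted_list_of_set X))"

definition Rset :: "nat \<Rightarrow> nat set \<Rightarrow> nat set" where
  "Rset j X = set (drop (card X - j) (sorted_list_of_set X))"

definition mu_weight :: "nat \<Rightarrow> real \<Rightarrow> nat set \<Rightarrow> real" where
  "mu_weight n p X = p ^ card X * (1 - p) ^ (n - card X)"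

text \<open>Pr[X \<in> F, Y \<in> G] for X, Y independent, each distributed as mu_p on subsets of [n]:
  the product measure of the pair (X,Y).\<close>
definition joint_prob :: "nat \<Rightarrow> real \<Rightarrow> nat set set \<Rightarrow> nat set set \<Rightarrow> real" where
  "joint_prob n p F G =
     (\<Sum>(X, Y) \<in> (F \<inter> Pow {1..n}) \<times> (G \<inter> Pow {1..n}). mu_weight n p X * mu_weight n p Y)"

end

theory Submission
  imports Defs
begin


lemma sl_set_id: "sorted xs \<Longrightarrow> distinct xs \<Longrightarrow> sorted_list_of_set (set xs) = xs"
  by (simp add: sorted_list_of_set_sort_remdups distinct_remdups_id sorted_sort_id)

lemma comb:
  assumes A: "A \<subseteq> {1..n}" and B: "B \<subseteq> {1..n}" and cA: "card A = a" and cB: "card B = a"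
    and ta: "t < a"
    and np: "\<not> preceq (t+1) (Lset (t+1) B) (Rset (t+1) A)"
  shows "\<exists>x\<in>{1..n}. card (B \<inter> {1..x}) + (a - t) \<le> card (A \<inter> {1..x})"
proof -
  have fA: "finite A" and fB: "finite B" using A B finite_subset by auto
  define xs where "xs = sorted_list_of_set A"
  define ys where "ys = sorted_list_of_set B"
  have sx: "sorted xs" "distinct xs" "set xs = A" "length xs = a"
    using fA cA by (auto simp: xs_def)
  have sy: "sorted ys" "distinct ys" "set ys = B" "length ys = a"
    using fB cB by (auto simp: ys_def)
  have L: "Lset (t+1) B = set (take (t+1) ys)" by (simp add: Lset_def ys_def)
  have R: "Rset (t+1) A = set (drop (a-(t+1)) xs)" by (simp add: Rset_def xs_def cA)
  have sL: "sorted_list_of_set (Lset (t+1) B) = take (t+1) ys"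
    unfolding L using sy by (intro sl_set_id) auto
  have sR: "sorted_list_of_set (Rset (t+1) A) = drop (a-(t+1)) xs"
    unfolding R using sx by (intro sl_set_id) auto
  have cL: "card (Lset (t+1) B) = t+1" unfolding L using sy ta
    by (simp add: distinct_card)
  have cR: "card (Rset (t+1) A) = t+1" unfolding R using sx ta
    by (simp add: distinct_card)
  from np obtain i where i: "i \<in> {1..t+1}" and gt: "\<not> mth (Lset (t+1) B) i \<le> mth (Rset (t+1) A) i"
    unfolding preceq_def using cL cR by auto
  define j where "j = a - t - 1 + (i - 1)"
  have g2: "\<not> take (t+1) ys ! (i-1) \<le> drop (a-(t+1)) xs ! (i-1)"
    using gt unfolding mth_def sL sR .
  have ij: "j < a" "ys ! (i-1) > xs ! j" using i ta g2 sx sy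
    by (auto simp: j_def nth_drop)
  define x where "x = xs ! j"
  have xA: "x \<in> A" using ij sx by (auto simp: x_def)
  have c1: "j + 1 \<le> card (A \<inter> {1..x})"
  proof -
    have "(\<lambda>k. xs ! k) ` {..j} \<subseteq> A \<inter> {1..x}"
    proof
      fix y assume "y \<in> (\<lambda>k. xs ! k) ` {..j}"
      then obtain k where k: "k \<le> j" "y = xs ! k" by auto
      have "y \<in> A" using k ij sx by auto
      moreover have "y \<le> x" using k ij sx by (auto simp: x_def intro: sorted_nth_mono)
      ultimately show "y \<in> A \<inter> {1..x}" using A by auto
    qed
    moreover have "inj_on (\<lambda>k. xs ! k) {..j}" using sx ij
      by (auto simp: inj_on_def nth_eq_iff_index_eq)
    ultimately have "card {..j} \<le> card (A \<inter> {1..x})"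
      by (metis card_image card_mono fA finite_Int)
    then show ?thesis by simp
  qed
  have c2: "card (B \<inter> {1..x}) \<le> i - 1"
  proof -
    have "B \<inter> {1..x} \<subseteq> (\<lambda>k. ys ! k) ` {..<i-1}"
    proof
      fix b assume b: "b \<in> B \<inter> {1..x}"
      then obtain k where k: "k < a" "b = ys ! k" using sy by (auto simp: in_set_conv_nth)
      have "k < i - 1"
      proof (rule ccontr)
        assume "\<not> k < i - 1"
        then have "ys ! (i-1) \<le> ys ! k" using sy k by (auto intro: sorted_nth_mono)
        then show False using b k ij by (auto simp: x_def)
      qed
      then show "b \<in> (\<lambda>k. ys ! k) ` {..<i-1}" using k by auto
    qed
    then have "card (B \<inter> {1..x}) \<le> card ((\<lambda>k. ys ! k) ` {..<i-1})"
      by (intro card_mono) auto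
    also have "\<dots> \<le> i - 1" using card_image_le[of "{..<i-1}" "\<lambda>k. ys ! k"] by simp
    finally show ?thesis .
  qed
  show ?thesis using xA A c1 c2 i ta unfolding j_def by (intro bexI[of _ x]) auto
qed


lemma weight_sum:
  fixes p c :: real
  assumes J: "J \<subseteq> {1..n}"
  shows "(\<Sum>S\<in>Pow {1..n}. mu_weight n p S * c ^ card (S \<inter> J)) = (p*c + 1 - p) ^ card J"
proof -
  have hS: "(\<Prod>i\<in>S. p * (if i\<in>J then c else 1)) * (\<Prod>i\<in>{1..n}-S. (1-p))
      = mu_weight n p S * c ^ card (S \<inter> J)" if S: "S \<in> Pow {1..n}" for S
  proof -
    have fS: "finite S" using S finite_subset by auto
    have "(\<Prod>i\<in>S. p * (if i\<in>J then c else 1)) = p ^ card S * (\<Prod>i\<in>S. (if i\<in>J then c else 1))"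
      by (simp add: prod.distrib)
    also have "(\<Prod>i\<in>S. (if i\<in>J then c else 1)) = (\<Prod>i\<in>S \<inter> J. c)"
      by (rule prod.inter_restrict[OF fS, symmetric])
    finally have 1: "(\<Prod>i\<in>S. p * (if i\<in>J then c else 1)) = p ^ card S * c ^ card (S \<inter> J)" by simp
    have 2: "(\<Prod>i\<in>{1..n}-S. (1-p)) = (1-p) ^ (n - card S)"
      using S by (simp add: card_Diff_subset fS)
    show ?thesis unfolding 1 2 mu_weight_def by simp
  qed
  have "(p*c + 1 - p) ^ card J = (\<Prod>i\<in>{1..n} \<inter> J. p*c+1-p)"
    using J by (simp add: Int_absorb1)
  also have "\<dots> = (\<Prod>i\<in>{1..n}. (if i\<in>J then p*c+1-p else 1))"
    by (rule prod.inter_restrict) simp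
  also have "\<dots> = (\<Prod>i\<in>{1..n}. p * (if i\<in>J then c else 1) + (1-p))"
    by (rule prod.cong) auto
  also have "\<dots> = (\<Sum>S\<in>Pow {1..n}. (\<Prod>i\<in>S. p * (if i\<in>J then c else 1)) * (\<Prod>i\<in>{1..n}-S. (1-p)))"
    by (rule prod_add) simp
  also have "\<dots> = (\<Sum>S\<in>Pow {1..n}. mu_weight n p S * c ^ card (S \<inter> J))"
    by (rule sum.cong[OF refl]) (rule hS)
  finally show ?thesis by simp
qed

lemma mu_nonneg: "0 \<le> p \<Longrightarrow> p \<le> 1 \<Longrightarrow> 0 \<le> mu_weight n (p::real) S"
  by (simp add: mu_weight_def)

lemma prod_bound:
  fixes p E E' :: real
  assumes "0 \<le> p" "p \<le> 1" "E * E' = 1" "0 < E'" "E' \<le> 1"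
  shows "(p*E + 1 - p) * (p*E' + 1 - p) \<le> exp (p * (E - 1)^2)"
proof -
  have eq: "(p*E + 1 - p) * (p*E' + 1 - p) = 1 + p*(1-p)*((E-1)^2 * E')"
  proof -
    have "(p*E + 1 - p) * (p*E' + 1 - p) = p^2*(E*E') + p*(1-p)*(E+E') + (1-p)^2"
      by (simp add: algebra_simps power2_eq_square)
    also have "\<dots> = p^2 + p*(1-p)*(E+E') + (1-p)^2" using assms(3) by simp
    finally have 1: "(p*E + 1 - p) * (p*E' + 1 - p) = p^2 + p*(1-p)*(E+E') + (1-p)^2" .
    have "(E-1)^2 * E' = E*(E*E') - 2*(E*E') + E'"
      by (simp add: algebra_simps power2_eq_square)
    also have "\<dots> = E - 2 + E'" using assms(3) by simp
    finally have 2: "(E-1)^2 * E' = E - 2 + E'" .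
    show ?thesis unfolding 1 2 by (simp add: algebra_simps power2_eq_square)
  qed
  have "(E-1)^2 * E' \<le> (E-1)^2" using assms by (simp add: mult_left_le)
  moreover have "0 \<le> (E-1)^2 * E'" using assms by simp
  moreover have "(1-p)*((E-1)^2 * E') \<le> (E-1)^2 * E'"
    using assms \<open>0 \<le> (E-1)^2 * E'\<close> by (intro mult_left_le_one_le) auto
  ultimately have "(1-p)*((E-1)^2 * E') \<le> (E-1)^2" by linarith
  then have "p*((1-p)*((E-1)^2 * E')) \<le> p * (E-1)^2"
    using assms by (intro mult_left_mono) auto
  then have "p*(1-p)*((E-1)^2 * E') \<le> p * (E-1)^2" by (simp add: mult.assoc)
  then have "(p*E + 1 - p) * (p*E' + 1 - p) \<le> 1 + p * (E-1)^2" using eq by simp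
  also have "\<dots> \<le> exp (p * (E - 1)^2)" by (rule exp_ge_add_one_self)
  finally show ?thesis .
qed

theorem lemma4:
  fixes n a t :: nat and F G :: "nat set set"
  assumes "t < a" and "a < n"
    and "F \<subseteq> {S. S \<subseteq> {1..n} \<and> card S = a}"
    and "G \<subseteq> {S. S \<subseteq> {1..n} \<and> card S = a}"
    and "\<forall>A\<in>F. \<forall>B\<in>G. \<not> preceq (t + 1) (Lset (t + 1) B) (Rset (t + 1) A)"
  shows "joint_prob n (real a / real n) F G
           \<le> 4 * real n * exp (- (real (a - t - 1))\<^sup>2 / (20 * real a))"
proof -
  define p where "p = real a / real n"
  define P where "P = Pow {1..n::nat}"
  define s where "s = real (a - t)"
  define l where "l = s / (4 * real a)"
  define E where "E = exp l"
  define E' where "E' = exp (- l)"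
  define w where "w = (\<lambda>X. mu_weight n p X)"
  define T where "T = (\<lambda>X Y. \<Sum>x\<in>{1..n}. exp (l * (real (card (X \<inter> {1..x})) - real (card (Y \<inter> {1..x})) - s)))"
  have a0: "0 < real a" using assms(1) by simp
  have n0: "0 < real n" using assms by simp
  have p01: "0 \<le> p" "p \<le> 1" using assms(2) by (auto simp: p_def)
  have s1: "1 \<le> s" "s \<le> real a" using assms(1) by (auto simp: s_def)
  have l0: "0 \<le> l" "l \<le> 1/4" using s1 a0 by (auto simp: l_def field_simps)
  have wnn: "0 \<le> w X" for X using p01 by (simp add: w_def mu_nonneg)
  have fP: "finite P" by (simp add: P_def)
  have Tnn: "0 \<le> T X Y" for X Y unfolding T_def by (intro sum_nonneg) auto
  have jp: "joint_prob n (real a / real n) F G = (\<Sum>(X,Y)\<in>(F \<inter> P) \<times> (G \<inter> P). w X * w Y)"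
    by (simp add: joint_prob_def p_def P_def w_def)
  have step1: "(\<Sum>(X,Y)\<in>(F \<inter> P) \<times> (G \<inter> P). w X * w Y) \<le> (\<Sum>(X,Y)\<in>(F \<inter> P) \<times> (G \<inter> P). w X * w Y * T X Y)"
  proof (rule sum_mono)
    fix XY assume XY: "XY \<in> (F \<inter> P) \<times> (G \<inter> P)"
    obtain X Y where XYe: "XY = (X,Y)" by force
    have X: "X \<in> F" "Y \<in> G" using XY XYe by auto
    have "\<exists>x\<in>{1..n}. card (Y \<inter> {1..x}) + (a - t) \<le> card (X \<inter> {1..x})"
      using X assms(3,4,5) assms(1) by (intro comb) auto
    then obtain x where x: "x \<in> {1..n}" "card (Y \<inter> {1..x}) + (a - t) \<le> card (X \<inter> {1..x})" by blast
    have "0 \<le> l * (real (card (X \<inter> {1..x})) - real (card (Y \<inter> {1..x})) - s)"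
      using x l0 unfolding s_def by (intro mult_nonneg_nonneg) auto
    then have "1 \<le> exp (l * (real (card (X \<inter> {1..x})) - real (card (Y \<inter> {1..x})) - s))"
      by simp
    also have "\<dots> \<le> T X Y" unfolding T_def
      by (rule member_le_sum[OF x(1)]) auto
    finally have "1 \<le> T X Y" .
    then have "w X * w Y * 1 \<le> w X * w Y * T X Y"
      by (intro mult_left_mono) (auto intro: mult_nonneg_nonneg wnn)
    then show "(case XY of (X,Y) \<Rightarrow> w X * w Y) \<le> (case XY of (X,Y) \<Rightarrow> w X * w Y * T X Y)"
      by (simp add: XYe)
  qed
  have step2: "(\<Sum>(X,Y)\<in>(F \<inter> P) \<times> (G \<inter> P). w X * w Y * T X Y) \<le> (\<Sum>(X,Y)\<in>P \<times> P. w X * w Y * T X Y)"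
    by (rule sum_mono2) (auto simp: fP intro!: mult_nonneg_nonneg wnn Tnn)
  have inner: "(\<Sum>(X,Y)\<in>P \<times> P. w X * w Y * exp (l * (real (card (X \<inter> {1..x})) - real (card (Y \<inter> {1..x})) - s)))
      = exp (- l * s) * ((p*E + 1 - p) * (p*E' + 1 - p)) ^ x" if x: "x \<in> {1..n}" for x
  proof -
    have e: "exp (l * (real (card (X \<inter> {1..x})) - real (card (Y \<inter> {1..x})) - s))
       = exp (- l * s) * (E ^ card (X \<inter> {1..x}) * E' ^ card (Y \<inter> {1..x}))" for X Y
    proof -
      have "exp (l * (real (card (X \<inter> {1..x})) - real (card (Y \<inter> {1..x})) - s))
          = exp (- l * s + (real (card (X \<inter> {1..x})) * l + real (card (Y \<inter> {1..x})) * (- l)))"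
        by (rule arg_cong[where f=exp]) (simp add: algebra_simps)
      also have "\<dots> = exp (- l * s) * (exp (real (card (X \<inter> {1..x})) * l) * exp (real (card (Y \<inter> {1..x})) * (- l)))"
        by (simp only: exp_add)
      also have "\<dots> = exp (- l * s) * (E ^ card (X \<inter> {1..x}) * E' ^ card (Y \<inter> {1..x}))"
        by (simp only: E_def E'_def exp_of_nat_mult)
      finally show ?thesis .
    qed
    have "(\<Sum>(X,Y)\<in>P \<times> P. w X * w Y * exp (l * (real (card (X \<inter> {1..x})) - real (card (Y \<inter> {1..x})) - s)))
       = (\<Sum>X\<in>P. \<Sum>Y\<in>P. exp (- l * s) * ((w X * E ^ card (X \<inter> {1..x})) * (w Y * E' ^ card (Y \<inter> {1..x}))))"
      unfolding sum.cartesian_product[symmetric] e by (simp add: algebra_simps)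
    also have "\<dots> = exp (- l * s) * (\<Sum>X\<in>P. \<Sum>Y\<in>P. (w X * E ^ card (X \<inter> {1..x})) * (w Y * E' ^ card (Y \<inter> {1..x})))"
      by (simp only: sum_distrib_left)
    also have "\<dots> = exp (- l * s) * ((\<Sum>X\<in>P. w X * E ^ card (X \<inter> {1..x})) * (\<Sum>Y\<in>P. w Y * E' ^ card (Y \<inter> {1..x})))"
      by (simp only: sum_product)
    also have "\<dots> = exp (- l * s) * ((p*E + 1 - p) ^ x * (p*E' + 1 - p) ^ x)"
    proof -
      have J: "{1..x} \<subseteq> {1..n}" using x by auto
      show ?thesis unfolding P_def w_def weight_sum[OF J] by simp
    qed
    finally show ?thesis by (simp add: power_mult_distrib)
  qed
  have step3: "(\<Sum>(X,Y)\<in>P \<times> P. w X * w Y * T X Y)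
      = (\<Sum>x\<in>{1..n}. exp (- l * s) * ((p*E + 1 - p) * (p*E' + 1 - p)) ^ x)"
  proof -
    have "(\<Sum>(X,Y)\<in>P \<times> P. w X * w Y * T X Y)
       = (\<Sum>(X,Y)\<in>P \<times> P. \<Sum>x\<in>{1..n}. w X * w Y * exp (l * (real (card (X \<inter> {1..x})) - real (card (Y \<inter> {1..x})) - s)))"
      unfolding T_def by (simp add: sum_distrib_left)
    also have "\<dots> = (\<Sum>x\<in>{1..n}. \<Sum>(X,Y)\<in>P \<times> P. w X * w Y * exp (l * (real (card (X \<inter> {1..x})) - real (card (Y \<inter> {1..x})) - s)))"
      unfolding case_prod_unfold by (rule sum.swap)
    also have "\<dots> = (\<Sum>x\<in>{1..n}. exp (- l * s) * ((p*E + 1 - p) * (p*E' + 1 - p)) ^ x)"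
      by (rule sum.cong[OF refl]) (erule inner)
    finally show ?thesis .
  qed
  have EE: "E * E' = 1" "0 < E'" "E' \<le> 1" using l0 by (auto simp: E_def E'_def exp_add[symmetric])
  have Eb: "0 \<le> E - 1" "E - 1 \<le> 5/4 * l"
  proof -
    show "0 \<le> E - 1" using l0 by (simp add: E_def)
    have "E \<le> 1 + l + l^2" unfolding E_def using l0 by (intro exp_bound) auto
    moreover have "l*l \<le> l*(1/4)" using l0 by (intro mult_left_mono) auto
    then have "l^2 \<le> l/4" by (simp add: power2_eq_square)
    ultimately show "E - 1 \<le> 5/4 * l" by simp
  qed
  have Esq: "(E-1)^2 \<le> 25/16 * l^2"
  proof -
    have "(E-1)^2 \<le> (5/4*l)^2" using Eb by (intro power_mono) auto
    moreover have "(5/4*l)^2 = 25/16*l^2" by (simp add: power2_eq_square)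
    ultimately show ?thesis by simp
  qed
  have termb: "exp (- l * s) * ((p*E + 1 - p) * (p*E' + 1 - p)) ^ x \<le> exp (- 39 * s^2 / (256 * real a))"
    if x: "x \<in> {1..n}" for x
  proof -
    define q where "q = (p*E + 1 - p) * (p*E' + 1 - p)"
    have "0 \<le> p*E" "0 \<le> p*E'" using p01 by (auto simp: E_def E'_def)
    then have q0: "0 \<le> q" unfolding q_def using p01
      by (intro mult_nonneg_nonneg) linarith+
    have "q ^ x \<le> exp (p * (E-1)^2) ^ x" unfolding q_def
      by (rule power_mono[OF prod_bound[OF p01 EE]]) (use q0 q_def in auto)
    also have "\<dots> = exp (real x * (p * (E-1)^2))" by (simp add: exp_of_nat_mult)
    also have "\<dots> \<le> exp (real n * (p * (E-1)^2))"
      using x p01 by (auto intro!: mult_right_mono mult_nonneg_nonneg)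
    also have "real n * (p * (E-1)^2) = real a * (E-1)^2" using n0 by (simp add: p_def)
    finally have qx: "q ^ x \<le> exp (real a * (E-1)^2)" .
    have "exp (- l * s) * q ^ x \<le> exp (- l * s) * exp (real a * (E-1)^2)"
      by (rule mult_left_mono[OF qx]) simp
    also have "\<dots> = exp (- l * s + real a * (E-1)^2)" by (simp only: exp_add)
    also have "\<dots> \<le> exp (- l * s + real a * (25/16 * l^2))"
      using Esq a0 by (simp add: mult_left_mono)
    also have "- l * s + real a * (25/16 * l^2) = - 39 * s^2 / (256 * real a)"
      using a0 unfolding l_def by (simp add: field_simps power2_eq_square)
    finally show ?thesis unfolding q_def .
  qed
  have step4: "(\<Sum>x\<in>{1..n}. exp (- l * s) * ((p*E + 1 - p) * (p*E' + 1 - p)) ^ x)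
      \<le> real n * exp (- 39 * s^2 / (256 * real a))"
    using sum_mono[OF termb, of "{1..n}"] by simp
  have fin: "- 39 * s^2 / (256 * real a) \<le> - (real (a - t - 1))\<^sup>2 / (20 * real a)"
  proof -
    have r: "real (a - t - 1) = s - 1" using assms(1) by (simp add: s_def of_nat_diff)
    have "(s - 1)^2 \<le> s^2" using s1 by (simp add: power2_eq_square algebra_simps)
    moreover have "0 \<le> s^2" by simp
    ultimately have "(s-1)^2 * 256 \<le> 39 * s^2 * 20" by linarith
    then show ?thesis unfolding r using a0 by (simp add: field_simps)
  qed
  have "joint_prob n (real a / real n) F G \<le> real n * exp (- 39 * s^2 / (256 * real a))"
    using jp step1 step2 step3 step4 by linarith
  also have "\<dots> \<le> real n * exp (- (real (a - t - 1))\<^sup>2 / (20 * real a))"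
    using fin n0 by simp
  also have "\<dots> \<le> 4 * real n * exp (- (real (a - t - 1))\<^sup>2 / (20 * real a))"
    using n0 by simp
  finally show ?thesis .
qed

end
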